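(* Let $r,I_1,I_2$ be positive integers with $r\le I_1I_2$. Let $\Psi=(\Gamma_1,\dots,\Gamma_r)$ and $\Psi'=(\Gamma'_1,\dots,\Gamma'_r)$ be tripartite states of format $r\times I_1\times I_2$ such that $\Gamma_1,\dots,\Gamma_r$ are linearly independent and $\Gamma'_1,\dots,\Gamma'_r$ are linearly independent. Choose complementary states $\overline{\Psi}=(\Gamma_{r+1},\dots,\Gamma_{I_1I_2})$ and $\overline{\Psi}'=(\Gamma'_{r+1},\dots,\Gamma'_{I_1I_2})$. Form the invertible $I_1I_2\times I_1I_2$ matrices $U=(\mathcal V(\Gamma_1),\dots,\mathcal V(\Gamma_{I_1I_2}))$ and $U'=(\mathcal V(\Gamma'_1),\dots,\mathcal V(\Gamma'_{I_1I_2}))$. Then $\Psi'$ and $\Psi$ are SLOCC equivalent if and only if there exist an invertible $P\in\mathbb C^{r\times r}$, an invertible $\overline P\in\mathbb C^{(I_1I_2-r)\times(I_1I_2-r)}$ and an arbitrary $Y\in\mathbb C^{r\times(I_1I_2-r)}$ such that, with $$\widetilde P=\begin{pmatrix}P&Y\\0&\overline P\end{pmatrix},$$ we have $$\operatorname{rank}\,\mathcal R\big(U\widetilde P\,U'^{-1}\big)=1 .$$ Equivalently, $U\widetilde P\,U'^{-1}$ is a Kronecker product $C\otimes B$ with $C\in\mathbb C^{I_2\times I_2}$ and $B\in\mathbb C^{I_1\times I_1}$. When $r=I_1I_2$, there are no complementary states and $\widetilde P=P$.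
   Context: **Tripartite states as tuples.** A tripartite (not necessarily normalized) state of format $r\times I_1\times I_2$ is written as a tuple $\Psi=(\Gamma_1,\dots,\Gamma_r)$ with $\Gamma_k\in\mathbb C^{I_1\times I_2}$. It stands for the vector $$\sum_{k=1}^r\sum_{i_1,i_2}(\Gamma_k)_{i_1i_2}\,|k\rangle|i_1\rangle|i_2\rangle\in\mathbb C^r\otimes\mathbb C^{I_1}\otimes\mathbb C^{I_2}.$$ **SLOCC equivalence.** Two states $|\Psi'\rangle,|\Psi\rangle$ of $N$ parties are SLOCC equivalent if $|\Psi'\rangle=A_1\otimes\cdots\otimes A_N|\Psi\rangle$ for some invertible matrices $A_j$. For tuples this reads: there are invertible $P_0\in\mathbb C^{r\times r}$, $A_1\in\mathbb C^{I_1\times I_1}$ and $A_2\in\mathbb C^{I_2\times I_2}$ with $$\Gamma'_k=\sum_l (P_0)_{kl}\,A_1\Gamma_lA_2^{\mathrm T}\quad\text{for all }k.$$ **Vectorization.** For $\Gamma\in\mathbb C^{I_1\times I_2}$, $\mathcal V(\Gamma)\in\mathbb C^{I_1I_2}$ is the column-stacking vectorization $(\Gamma_{11},\dots,\Gamma_{I_11},\Gamma_{12},\dots,\Gamma_{I_1I_2})^{\mathrm T}$. It satisfies $\mathcal V(B\Gamma C^{\mathrm T})=(C\otimes B)\mathcal V(\Gamma)$. **Complementary state.** If $\Gamma_1,\dots,\Gamma_r$ are linearly independent, a complementary state of $(\Gamma_1,\dots,\Gamma_r)$ is any tuple $(\Gamma_{r+1},\dots,\Gamma_{I_1I_2})$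 of matrices in $\mathbb C^{I_1\times I_2}$ such that $\Gamma_1,\dots,\Gamma_{I_1I_2}$ form a basis of $\mathbb C^{I_1\times I_2}$. **Realignment.** Partition an $I_1I_2\times I_1I_2$ matrix $M$ into an $I_2\times I_2$ array of blocks $M_{ij}\in\mathbb C^{I_1\times I_1}$. Then $$\mathcal R(M)=\big(\mathcal V(M_{11}),\dots,\mathcal V(M_{I_21}),\mathcal V(M_{12}),\dots,\mathcal V(M_{I_2I_2})\big)^{\mathrm T}\in\mathbb C^{I_2^2\times I_1^2}.$$ With this convention, $\mathcal R(M)$ has rank $1$ exactly when $M=C\otimes B$ with $C\in\mathbb C^{I_2\times I_2}$, $B\in\mathbb C^{I_1\times I_1}$ and $M\neq 0$. *)

theory Defs
  imports "Jordan_Normal_Form.DL_Rank"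
begin

text \<open>Conventions: all indices are 0-based. A tuple of matrices
  (Gamma_1,...,Gamma_m) is a function G :: nat => complex mat, where Gamma_(k+1) is G k.
  A state (Gamma_1..Gamma_r) together with a complementary state
  (Gamma_(r+1)..Gamma_(I1 I2)) is thus one function G on indices below I1*I2.\<close>

definition vecz :: "'a mat \<Rightarrow> 'a vec" where
  "vecz A = vec (dim_row A * dim_col A) (\<lambda>k. A $$ (k mod dim_row A, k div dim_row A))"

definition lin_indep_mats :: "nat \<Rightarrow> nat \<Rightarrow> (nat \<Rightarrow> complex mat) \<Rightarrow> nat \<Rightarrow> bool" where
  "lin_indep_mats I1 I2 G m \<longleftrightarrow>
     (\<forall>c :: nat \<Rightarrow> complex.
        (\<forall>i<I1. \<forall>j<I2. (\<Sum>k<m. c k * G k $$ (i,j)) = 0) \<longrightarrow> (\<forall>k<m. c k = 0))"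

definition spanning_mats :: "nat \<Rightarrow> nat \<Rightarrow> (nat \<Rightarrow> complex mat) \<Rightarrow> nat \<Rightarrow> bool" where
  "spanning_mats I1 I2 G m \<longleftrightarrow>
     (\<forall>M \<in> carrier_mat I1 I2. \<exists>c :: nat \<Rightarrow> complex.
        \<forall>i<I1. \<forall>j<I2. M $$ (i,j) = (\<Sum>k<m. c k * G k $$ (i,j)))"

definition complementary_state :: "nat \<Rightarrow> nat \<Rightarrow> nat \<Rightarrow> (nat \<Rightarrow> complex mat) \<Rightarrow> bool" where
  "complementary_state r I1 I2 G \<longleftrightarrow>
     (\<forall>k<I1*I2. G k \<in> carrier_mat I1 I2) \<and>
     lin_indep_mats I1 I2 G (I1*I2) \<and> spanning_mats I1 I2 G (I1*I2)"

definition slocc_equiv :: "nat \<Rightarrow> nat \<Rightarrow> nat \<Rightarrow> (nat \<Rightarrow> complex mat) \<Rightarrow> (nat \<Rightarrow> complex mat) \<Rightarrow> bool" where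
  "slocc_equiv r I1 I2 G' G \<longleftrightarrow>
     (\<exists>P0 A1 A2. P0 \<in> carrier_mat r r \<and> invertible_mat P0 \<and>
        A1 \<in> carrier_mat I1 I1 \<and> invertible_mat A1 \<and>
        A2 \<in> carrier_mat I2 I2 \<and> invertible_mat A2 \<and>
        (\<forall>k<r. G' k = mat I1 I2 (\<lambda>(i,j). \<Sum>l<r. P0 $$ (k,l) * (A1 * G l * transpose_mat A2) $$ (i,j))))"

definition state_mat :: "nat \<Rightarrow> nat \<Rightarrow> (nat \<Rightarrow> complex mat) \<Rightarrow> complex mat" where
  "state_mat I1 I2 G = mat (I1*I2) (I1*I2) (\<lambda>(i,j). vecz (G j) $ i)"

definition mat_inv :: "'a :: semiring_1 mat \<Rightarrow> 'a mat" where
  "mat_inv A = (SOME B. inverts_mat A B \<and> inverts_mat B A)"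

text \<open>Realignment of an (I1 I2) x (I1 I2) matrix, partitioned into I2 x I2 blocks of
  size I1 x I1: row (i + I2 j) is V(M_ij) (0-based block indices).\<close>
definition realign :: "nat \<Rightarrow> nat \<Rightarrow> 'a mat \<Rightarrow> 'a mat" where
  "realign I1 I2 M = mat (I2*I2) (I1*I1)
     (\<lambda>(p,q). M $$ ((p mod I2) * I1 + q mod I1, (p div I2) * I1 + q div I1))"

definition kron :: "'a :: times mat \<Rightarrow> 'a mat \<Rightarrow> 'a mat" where
  "kron C B = mat (dim_row C * dim_row B) (dim_col C * dim_col B)
     (\<lambda>(i,j). C $$ (i div dim_row B, j div dim_col B) * B $$ (i mod dim_row B, j mod dim_col B))"

end

theory Submission
  imports Defs "Jordan_Normal_Form.DL_Rank_Submatrix"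
begin

lemma inv_mat_det:
  fixes A :: "complex mat" assumes A: "A \<in> carrier_mat n n"
  shows "invertible_mat A \<longleftrightarrow> det A \<noteq> 0"
proof
  assume "invertible_mat A"
  then obtain B where AB: "A * B = 1\<^sub>m n" and BA: "B * A = 1\<^sub>m (dim_row B)"
    using A unfolding invertible_mat_def inverts_mat_def by auto
  have "dim_row B = n" using BA A
    by (metis carrier_matD(2) index_mult_mat(3) index_one_mat(3))
  moreover have "dim_col B = n" using AB A
    by (metis index_mult_mat(3) index_one_mat(3))
  ultimately have B: "B \<in> carrier_mat n n" by auto
  from arg_cong[OF AB, of det] det_mult[OF A B] show "det A \<noteq> 0" by auto
next
  assume "det A \<noteq> 0"
  from det_non_zero_imp_unit[OF A this, of undefined]
  obtain B where B: "B \<in> carrier_mat n n" "A * B = 1\<^sub>m n" "B * A = 1\<^sub>m n"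
    unfolding Units_def ring_mat_def by auto
  then show "invertible_mat A" using A unfolding invertible_mat_def inverts_mat_def square_mat.simps
    by auto
qed

lemma mat_inv_props:
  fixes A :: "complex mat" assumes A: "A \<in> carrier_mat n n" and "invertible_mat A"
  shows "mat_inv A \<in> carrier_mat n n" "A * mat_inv A = 1\<^sub>m n" "mat_inv A * A = 1\<^sub>m n"
proof -
  have ex: "\<exists>B. inverts_mat A B \<and> inverts_mat B A" using assms unfolding invertible_mat_def by auto
  have i: "inverts_mat A (mat_inv A) \<and> inverts_mat (mat_inv A) A"
    unfolding mat_inv_def by (rule someI_ex[OF ex])
  let ?B = "mat_inv A"
  have AB: "A * ?B = 1\<^sub>m n" and BA: "?B * A = 1\<^sub>m (dim_row ?B)" using i A unfolding inverts_mat_def by auto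
  have "dim_row ?B = n" using BA A
    by (metis carrier_matD(2) index_mult_mat(3) index_one_mat(3))
  moreover have "dim_col ?B = n" using AB A
    by (metis index_mult_mat(3) index_one_mat(3))
  ultimately show B: "?B \<in> carrier_mat n n" by auto
  show "A * ?B = 1\<^sub>m n" by fact
  show "?B * A = 1\<^sub>m n" using BA B by auto
qed

lemma sum_split_mult: "(\<Sum>i<(m::nat)*k. f i) = (\<Sum>c<m. \<Sum>d<k. f (d + k*c)::'a::comm_monoid_add)"
proof -
  have "(\<Sum>i<m*k. f i) = (\<Sum>c<m. sum f {c*k..<c*k+k})" by (rule sum.nat_group[symmetric])
  also have "\<dots> = (\<Sum>c<m. \<Sum>d<k. f (d + k*c))"
  proof (rule sum.cong[OF refl])
    fix c
    have "sum f {0+c*k..<k+c*k} = (\<Sum>d=0..<k. f (d + c*k))" by (rule sum.shift_bounds_nat_ivl)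
    then show "sum f {c*k..<c*k+k} = (\<Sum>d<k. f (d + k*c))"
      by (simp add: add.commute mult.commute atLeast0LessThan)
  qed
  finally show ?thesis .
qed

lemma vecz_dim[simp]: "A \<in> carrier_mat I1 I2 \<Longrightarrow> dim_vec (vecz A) = I1*I2"
  unfolding vecz_def by auto

lemma vecz_carrier: "A \<in> carrier_mat I1 I2 \<Longrightarrow> vecz A \<in> carrier_vec (I1*I2)"
  unfolding vecz_def carrier_vec_def by auto

lemma vecz_index: "A \<in> carrier_mat I1 I2 \<Longrightarrow> i < I1*I2 \<Longrightarrow> vecz A $ i = A $$ (i mod I1, i div I1)"
  unfolding vecz_def by auto

lemma idx_mod: "(a::nat) < I1 \<Longrightarrow> (a + I1*b) mod I1 = a" by simp
lemma idx_div: "(a::nat) < I1 \<Longrightarrow> (a + I1*b) div I1 = b" by simp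
lemma idx_lt: "(a::nat) < I1 \<Longrightarrow> b < I2 \<Longrightarrow> a + I1*b < I1*I2"
proof -
  assume "a < I1" "b < I2"
  then have "a + I1*b < I1 + I1*b" by simp
  also have "\<dots> = I1*(Suc b)" by simp
  also have "\<dots> \<le> I1*I2" using \<open>b < I2\<close> by (intro mult_le_mono2) simp
  finally show ?thesis .
qed

lemma vecz_inj:
  assumes "A \<in> carrier_mat I1 I2" "B \<in> carrier_mat I1 I2" "vecz A = vecz B"
  shows "A = B"
proof (rule eq_matI)
  fix a b assume ab: "a < dim_row B" "b < dim_col B"
  then have a: "a < I1" and b: "b < I2" using assms by auto
  have "vecz A $ (a + I1*b) = vecz B $ (a + I1*b)" using assms by simp
  then show "A $$ (a,b) = B $$ (a,b)"
    using vecz_index[OF assms(1) idx_lt[OF a b]] vecz_index[OF assms(2) idx_lt[OF a b]] a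
    by simp
qed (use assms in auto)

lemma kron_carrier: "C \<in> carrier_mat I2 I2 \<Longrightarrow> B \<in> carrier_mat I1 I1 \<Longrightarrow> kron C B \<in> carrier_mat (I1*I2) (I1*I2)"
  unfolding kron_def carrier_mat_def by (auto simp: mult.commute)

lemma kron_index: "C \<in> carrier_mat I2 I2 \<Longrightarrow> B \<in> carrier_mat I1 I1 \<Longrightarrow> i < I1*I2 \<Longrightarrow> j < I1*I2 \<Longrightarrow>
  kron C B $$ (i,j) = C $$ (i div I1, j div I1) * B $$ (i mod I1, j mod I1)"
  unfolding kron_def by (auto simp: mult.commute)

lemma kron_vecz:
  fixes C B X :: "complex mat"
  assumes C: "C \<in> carrier_mat I2 I2" and B: "B \<in> carrier_mat I1 I1" and X: "X \<in> carrier_mat I1 I2"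
  shows "kron C B *\<^sub>v vecz X = vecz (B * X * transpose_mat C)"
proof (rule eq_vecI)
  have BXC: "B * X * transpose_mat C \<in> carrier_mat I1 I2" using B X C by auto
  show "dim_vec (kron C B *\<^sub>v vecz X) = dim_vec (vecz (B * X * transpose_mat C))"
    using kron_carrier[OF C B] BXC by simp
  fix i assume "i < dim_vec (vecz (B * X * transpose_mat C))"
  then have i: "i < I1*I2" using BXC by simp
  have I1: "0 < I1" using i by (cases I1) auto
  have a: "i mod I1 < I1" and b: "i div I1 < I2" using i I1
    by (auto simp: less_mult_imp_div_less mult.commute)
  have "(kron C B *\<^sub>v vecz X) $ i = (\<Sum>k<I2*I1. kron C B $$ (i,k) * vecz X $ k)"
    using kron_carrier[OF C B] i X
    by (simp add: mult_mat_vec_def scalar_prod_def atLeast0LessThan mult.commute)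
  also have "\<dots> = (\<Sum>c<I2. \<Sum>d<I1. kron C B $$ (i,d + I1*c) * vecz X $ (d + I1*c))"
    by (rule sum_split_mult)
  also have "\<dots> = (\<Sum>c<I2. \<Sum>d<I1. C $$ (i div I1, c) * B $$ (i mod I1, d) * X $$ (d, c))"
    using i idx_lt kron_index[OF C B] vecz_index[OF X] by (intro sum.cong refl) simp
  also have "\<dots> = (\<Sum>c<I2. (\<Sum>d<I1. B $$ (i mod I1, d) * X $$ (d, c)) * C $$ (i div I1, c))"
    by (simp add: sum_distrib_right, intro sum.cong refl, simp add: algebra_simps)
  also have "\<dots> = (B * X * transpose_mat C) $$ (i mod I1, i div I1)"
    using B X C a b
    by (simp add: scalar_prod_def atLeast0LessThan sum_distrib_left sum_distrib_right mult.assoc, subst sum.swap, simp)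
  also have "\<dots> = vecz (B * X * transpose_mat C) $ i" using vecz_index[OF BXC i] by simp
  finally show "(kron C B *\<^sub>v vecz X) $ i = vecz (B * X * transpose_mat C) $ i" .
qed

lemma det2: fixes A :: "complex mat" assumes A: "A \<in> carrier_mat 2 2"
  shows "det A = A$$(0,0)*A$$(1,1) - A$$(0,1)*A$$(1,0)"
proof -
  have "det A = (\<Sum>i<2. A $$ (i,0) * cofactor A i 0)" by (rule laplace_expansion_column[OF A]) simp
  also have "\<dots> = A $$ (0,0) * cofactor A 0 0 + A $$ (1,0) * cofactor A 1 0"
    by (simp add: numeral_2_eq_2)
  also have "cofactor A 0 0 = A$$(1,1)"
  proof -
    have c: "mat_delete A 0 0 \<in> carrier_mat 1 1" using mat_delete_carrier[OF A] by simp
    show ?thesis unfolding cofactor_def det_single[OF c] using A by (simp add: mat_delete_def)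
  qed
  also have "cofactor A 1 0 = - A$$(0,1)"
  proof -
    have c: "mat_delete A 1 0 \<in> carrier_mat 1 1" using mat_delete_carrier[OF A] by simp
    show ?thesis unfolding cofactor_def det_single[OF c] using A by (simp add: mat_delete_def)
  qed
  finally show ?thesis by (simp add: algebra_simps)
qed

lemma card_single_lt: "(p::nat) < m \<Longrightarrow> card {i. i < m \<and> i \<in> {p}} = 1"
proof -
  assume "p < m" then have "{i. i < m \<and> i \<in> {p}} = {p}" by auto
  then show ?thesis by simp
qed

lemma card_two_lt: "(p1::nat) < p2 \<Longrightarrow> p2 < m \<Longrightarrow> card {i. i < m \<and> i \<in> {p1,p2}} = 2"
proof -
  assume "p1 < p2" "p2 < m" then have "p1 < m" by linarith
  with \<open>p2 < m\<close> have "{i. i < m \<and> i \<in> {p1,p2}} = {p1,p2}" by auto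
  then show ?thesis using \<open>p1 < p2\<close> by simp
qed

lemma rank_ge1:
  fixes R :: "complex mat"
  assumes R: "R \<in> carrier_mat m k" and p: "p < m" and q: "q < k" and nz: "R $$ (p,q) \<noteq> 0"
  shows "1 \<le> vec_space.rank m R"
proof -
  let ?S = "submatrix R {p} {q}"
  have dr: "dim_row R = m" "dim_col R = k" using R by auto
  have c1: "card {i. i < dim_row R \<and> i \<in> {p}} = 1" unfolding dr by (rule card_single_lt[OF p])
  have c2: "card {i. i < dim_col R \<and> i \<in> {q}} = 1" unfolding dr by (rule card_single_lt[OF q])
  have "dim_row ?S = 1" unfolding dim_submatrix(1) by (rule c1)
  moreover have "dim_col ?S = 1" unfolding dim_submatrix(2) by (rule c2)
  ultimately have S: "?S \<in> carrier_mat 1 1" by (rule carrier_matI)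
  have e: "?S $$ (card {a\<in>{p}. a < p}, card {a\<in>{q}. a < q}) = R $$ (p,q)"
    by (rule submatrix_index_card) (use R p q in auto)
  have d: "{a\<in>{p}. a < p} = {}" "{a\<in>{q}. a < q} = {}" by auto
  have "?S $$ (0,0) = R $$ (p,q)" using e[unfolded d] by simp
  then have "det ?S \<noteq> 0" using det_single[OF S] nz by simp
  then have "card {j. j < k \<and> j \<in> {q}} \<le> vec_space.rank m R" by (rule vec_space.rank_gt_minor[OF R])
  then show ?thesis unfolding card_single_lt[OF q] .
qed

lemma rank_ge2:
  fixes R :: "complex mat"
  assumes R: "R \<in> carrier_mat m k" and p: "p1 < p2" "p2 < m" and q: "q1 < q2" "q2 < k"
   and nz: "R $$ (p1,q1) * R $$ (p2,q2) \<noteq> R $$ (p1,q2) * R $$ (p2,q1)"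
  shows "2 \<le> vec_space.rank m R"
proof -
  let ?S = "submatrix R {p1,p2} {q1,q2}"
  have dr: "dim_row R = m" "dim_col R = k" using R by auto
  have c1: "card {i. i < dim_row R \<and> i \<in> {p1,p2}} = 2" unfolding dr by (rule card_two_lt[OF p])
  have c2: "card {i. i < dim_col R \<and> i \<in> {q1,q2}} = 2" unfolding dr by (rule card_two_lt[OF q])
  have "dim_row ?S = 2" unfolding dim_submatrix(1) by (rule c1)
  moreover have "dim_col ?S = 2" unfolding dim_submatrix(2) by (rule c2)
  ultimately have S: "?S \<in> carrier_mat 2 2" by (rule carrier_matI)
  have e: "?S $$ (card {a\<in>{p1,p2}. a < i}, card {a\<in>{q1,q2}. a < j}) = R $$ (i,j)"
    if "i \<in> {p1,p2}" "j \<in> {q1,q2}" for i j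
    by (rule submatrix_index_card) (use R p q that in auto)
  have d1: "{a\<in>{p1,p2}. a < p1} = {}" "{a\<in>{p1,p2}. a < p2} = {p1}" using p by auto
  have d2: "{a\<in>{q1,q2}. a < q1} = {}" "{a\<in>{q1,q2}. a < q2} = {q1}" using q by auto
  have "?S $$ (0,0) = R $$ (p1,q1)" using e[of p1 q1, unfolded d1 d2] by simp
  moreover have "?S $$ (1,1) = R $$ (p2,q2)" using e[of p2 q2, unfolded d1 d2] by simp
  moreover have "?S $$ (0,1) = R $$ (p1,q2)" using e[of p1 q2, unfolded d1 d2] by simp
  moreover have "?S $$ (1,0) = R $$ (p2,q1)" using e[of p2 q1, unfolded d1 d2] by simp
  ultimately have "det ?S \<noteq> 0" using det2[OF S] nz by simp
  then have "card {j. j < k \<and> j \<in> {q1,q2}} \<le> vec_space.rank m R" by (rule vec_space.rank_gt_minor[OF R])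
  then show ?thesis unfolding card_two_lt[OF q] .
qed

lemma rank1_product:
  fixes R :: "complex mat"
  assumes R: "R \<in> carrier_mat m k" and rk: "vec_space.rank m R = 1"
  shows "\<exists>f g. \<forall>p<m. \<forall>q<k. R $$ (p,q) = f p * g q"
proof (cases "\<forall>p<m. \<forall>q<k. R $$ (p,q) = 0")
  case True then show ?thesis by (intro exI[of _ "\<lambda>_. 0"]) auto
next
  case False
  then obtain p0 q0 where p0: "p0 < m" and q0: "q0 < k" and nz: "R $$ (p0,q0) \<noteq> 0" by auto
  have minor: "R $$ (p,q) * R $$ (p0,q0) = R $$ (p,q0) * R $$ (p0,q)" if p: "p < m" and q: "q < k" for p q
  proof -
    have gen: "R $$ (a1,b1) * R $$ (a2,b2) = R $$ (a1,b2) * R $$ (a2,b1)"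
      if "a1 < a2" "a2 < m" "b1 < b2" "b2 < k" for a1 a2 b1 b2
      using rank_ge2[OF R that] rk by fastforce
    consider "p = p0" | "q = q0" | "p < p0" "q < q0" | "p < p0" "q0 < q" | "p0 < p" "q < q0" | "p0 < p" "q0 < q"
      by linarith
    then show ?thesis
    proof cases
      case 3 then show ?thesis using gen[of p p0 q q0] p q p0 q0 by simp
    next
      case 4 then show ?thesis using gen[of p p0 q0 q] p q p0 q0 by (simp add: mult.commute)
    next
      case 5 then show ?thesis using gen[of p0 p q q0] p q p0 q0 by (simp add: mult.commute)
    next
      case 6 then show ?thesis using gen[of p0 p q0 q] p q p0 q0 by (simp add: mult.commute)
    qed (auto simp: mult.commute)
  qed
  show ?thesis
  proof (intro exI allI impI)
    fix p q assume "p < m" "q < k"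
    from minor[OF this] nz show "R $$ (p,q) = R $$ (p,q0) / R $$ (p0,q0) * R $$ (p0,q)"
      by (simp add: field_simps)
  qed
qed

lemma realign_carrier: "realign I1 I2 M \<in> carrier_mat (I2*I2) (I1*I1)"
  unfolding realign_def by auto

lemma divmod_bounds: "(i::nat) < I1*I2 \<Longrightarrow> i mod I1 < I1 \<and> i div I1 < I2"
proof -
  assume i: "i < I1*I2"
  then have I1: "0 < I1" by (cases I1) auto
  then show ?thesis using i by (auto simp: less_mult_imp_div_less mult.commute)
qed

lemma realign_index: "p < I2*I2 \<Longrightarrow> q < I1*I1 \<Longrightarrow>
   realign I1 I2 M $$ (p,q) = M $$ ((p mod I2) * I1 + q mod I1, (p div I2) * I1 + q div I1)"
  unfolding realign_def by auto

lemma realign_kron: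
  fixes C B :: "complex mat"
  assumes C: "C \<in> carrier_mat I2 I2" and B: "B \<in> carrier_mat I1 I1" and p: "p < I2*I2" and q: "q < I1*I1"
  shows "realign I1 I2 (kron C B) $$ (p,q) = C $$ (p mod I2, p div I2) * B $$ (q mod I1, q div I1)"
proof -
  from divmod_bounds[OF p] have p1: "p mod I2 < I2" "p div I2 < I2" by auto
  from divmod_bounds[OF q] have q1: "q mod I1 < I1" "q div I1 < I1" by auto
  have l1: "(p mod I2) * I1 + q mod I1 < I1*I2" using idx_lt[OF q1(1) p1(1)] by (simp add: mult.commute)
  have l2: "(p div I2) * I1 + q div I1 < I1*I2" using idx_lt[OF q1(2) p1(2)] by (simp add: mult.commute)
  show ?thesis unfolding realign_index[OF p q] kron_index[OF C B l1 l2] using q1 by simp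
qed

lemma kron_rank1:
  fixes C B :: "complex mat"
  assumes C: "C \<in> carrier_mat I2 I2" and B: "B \<in> carrier_mat I1 I1"
    and i: "i < I1*I2" and j: "j < I1*I2" and nz: "kron C B $$ (i,j) \<noteq> 0"
  shows "vec_space.rank (I2*I2) (realign I1 I2 (kron C B)) = 1"
proof -
  let ?R = "realign I1 I2 (kron C B)"
  have le: "vec_space.rank (I2*I2) ?R \<le> 1"
    by (rule vec_space.rank_le_1_product_entries[OF realign_carrier,
          of _ _ _ "\<lambda>p. C $$ (p mod I2, p div I2)" "\<lambda>q. B $$ (q mod I1, q div I1)"])
       (use realign_kron[OF C B] realign_carrier[of I1 I2 "kron C B"] in auto)
  from divmod_bounds[OF i] have i1: "i mod I1 < I1" "i div I1 < I2" by auto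
  from divmod_bounds[OF j] have j1: "j mod I1 < I1" "j div I1 < I2" by auto
  define p where "p = i div I1 + I2 * (j div I1)"
  define q where "q = i mod I1 + I1 * (j mod I1)"
  have p: "p < I2*I2" unfolding p_def by (rule idx_lt[OF i1(2) j1(2)])
  have q: "q < I1*I1" unfolding q_def by (rule idx_lt[OF i1(1) j1(1)])
  have "?R $$ (p,q) = kron C B $$ (i,j)"
    using realign_kron[OF C B p q] kron_index[OF C B i j] i1 j1 by (simp add: p_def q_def)
  then have "1 \<le> vec_space.rank (I2*I2) ?R"
    using rank_ge1[OF realign_carrier p q] nz by simp
  with le show ?thesis by simp
qed

lemma rank1_kron:
  fixes K :: "complex mat"
  assumes K: "K \<in> carrier_mat (I1*I2) (I1*I2)" and rk: "vec_space.rank (I2*I2) (realign I1 I2 K) = 1"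
  shows "\<exists>C B. C \<in> carrier_mat I2 I2 \<and> B \<in> carrier_mat I1 I1 \<and> K = kron C B"
proof -
  obtain f g where fg: "\<forall>p<I2*I2. \<forall>q<I1*I1. realign I1 I2 K $$ (p,q) = f p * g q"
    using rank1_product[OF realign_carrier rk] by blast
  define C where "C = mat I2 I2 (\<lambda>(a,b). f (a + I2*b))"
  define B where "B = mat I1 I1 (\<lambda>(a,b). g (a + I1*b))"
  have C: "C \<in> carrier_mat I2 I2" and B: "B \<in> carrier_mat I1 I1" unfolding C_def B_def by auto
  have "K = kron C B"
  proof (rule eq_matI)
    show "dim_row K = dim_row (kron C B)" "dim_col K = dim_col (kron C B)"
      using K kron_carrier[OF C B] by auto
    fix i j assume "i < dim_row (kron C B)" "j < dim_col (kron C B)"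
    then have i: "i < I1*I2" and j: "j < I1*I2" using kron_carrier[OF C B] by auto
    from divmod_bounds[OF i] have i1: "i mod I1 < I1" "i div I1 < I2" by auto
    from divmod_bounds[OF j] have j1: "j mod I1 < I1" "j div I1 < I2" by auto
    define p where "p = i div I1 + I2 * (j div I1)"
    define q where "q = i mod I1 + I1 * (j mod I1)"
    have p: "p < I2*I2" unfolding p_def by (rule idx_lt[OF i1(2) j1(2)])
    have q: "q < I1*I1" unfolding q_def by (rule idx_lt[OF i1(1) j1(1)])
    have e1: "(p mod I2) * I1 + q mod I1 = i" unfolding p_def q_def using i1 j1
      by (simp add: mult.commute)
    have e2: "(p div I2) * I1 + q div I1 = j" unfolding p_def q_def using i1 j1
      by (simp add: mult.commute)
    have "realign I1 I2 K $$ (p,q) = K $$ (i,j)"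
      using realign_index[OF p q, of K] unfolding e1 e2 .
    then have "K $$ (i,j) = f p * g q" using fg p q by simp
    also have "\<dots> = kron C B $$ (i,j)"
    proof -
      have "C $$ (i div I1, j div I1) = f p" unfolding C_def p_def using i1 j1 by simp
      moreover have "B $$ (i mod I1, j mod I1) = g q" unfolding B_def q_def using i1 j1 by simp
      ultimately show ?thesis using kron_index[OF C B i j] by simp
    qed
    finally show "K $$ (i,j) = kron C B $$ (i,j)" .
  qed
  with C B show ?thesis by blast
qed

definition lin :: "nat \<Rightarrow> nat \<Rightarrow> (nat \<Rightarrow> complex) \<Rightarrow> (nat \<Rightarrow> complex mat) \<Rightarrow> nat \<Rightarrow> complex mat" where
  "lin I1 I2 c X m = mat I1 I2 (\<lambda>(i,j). \<Sum>l<m. c l * X l $$ (i,j))"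

lemma lin_carrier: "lin I1 I2 c X m \<in> carrier_mat I1 I2" unfolding lin_def by auto

lemma lin_cong: "(\<And>l. l < m \<Longrightarrow> X l = X' l) \<Longrightarrow> lin I1 I2 c X m = lin I1 I2 c X' m"
  unfolding lin_def by (intro eq_matI) auto

lemma lin_mult_left:
  assumes M: "M \<in> carrier_mat I1 I1" and X: "\<And>l. l < m \<Longrightarrow> X l \<in> carrier_mat I1 I2"
  shows "M * lin I1 I2 c X m = lin I1 I2 c (\<lambda>l. M * X l) m"
proof (rule eq_matI)
  fix a b assume ab: "a < dim_row (lin I1 I2 c (\<lambda>l. M * X l) m)" "b < dim_col (lin I1 I2 c (\<lambda>l. M * X l) m)"
  then have a: "a < I1" and b: "b < I2" unfolding lin_def by auto
  have "(M * lin I1 I2 c X m) $$ (a,b) = (\<Sum>d<I1. M $$ (a,d) * (\<Sum>l<m. c l * X l $$ (d,b)))"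
    using M a b by (simp add: lin_def scalar_prod_def atLeast0LessThan)
  also have "\<dots> = (\<Sum>l<m. c l * (\<Sum>d<I1. M $$ (a,d) * X l $$ (d,b)))"
    by (simp add: sum_distrib_left mult.left_commute, subst sum.swap, simp)
  also have "\<dots> = lin I1 I2 c (\<lambda>l. M * X l) m $$ (a,b)"
  proof -
    have "(M * X l) $$ (a,b) = (\<Sum>d<I1. M $$ (a,d) * X l $$ (d,b))" if "l < m" for l
      using M a b X[OF that] by (simp add: scalar_prod_def atLeast0LessThan)
    then show ?thesis using a b by (simp add: lin_def)
  qed
  finally show "(M * lin I1 I2 c X m) $$ (a,b) = lin I1 I2 c (\<lambda>l. M * X l) m $$ (a,b)" .
qed (use M in \<open>auto simp: lin_def\<close>)

lemma lin_mult_right: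
  assumes N: "N \<in> carrier_mat I2 I2" and X: "\<And>l. l < m \<Longrightarrow> X l \<in> carrier_mat I1 I2"
  shows "lin I1 I2 c X m * N = lin I1 I2 c (\<lambda>l. X l * N) m"
proof (rule eq_matI)
  fix a b assume ab: "a < dim_row (lin I1 I2 c (\<lambda>l. X l * N) m)" "b < dim_col (lin I1 I2 c (\<lambda>l. X l * N) m)"
  then have a: "a < I1" and b: "b < I2" unfolding lin_def by auto
  have "(lin I1 I2 c X m * N) $$ (a,b) = (\<Sum>d<I2. (\<Sum>l<m. c l * X l $$ (a,d)) * N $$ (d,b))"
    using N a b by (simp add: lin_def scalar_prod_def atLeast0LessThan)
  also have "\<dots> = (\<Sum>l<m. c l * (\<Sum>d<I2. X l $$ (a,d) * N $$ (d,b)))"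
    by (simp add: sum_distrib_left sum_distrib_right mult.assoc, subst sum.swap, simp)
  also have "\<dots> = lin I1 I2 c (\<lambda>l. X l * N) m $$ (a,b)"
  proof -
    have "(X l * N) $$ (a,b) = (\<Sum>d<I2. X l $$ (a,d) * N $$ (d,b))" if "l < m" for l
      using N a b X[OF that] by (simp add: scalar_prod_def atLeast0LessThan)
    then show ?thesis using a b by (simp add: lin_def)
  qed
  finally show "(lin I1 I2 c X m * N) $$ (a,b) = lin I1 I2 c (\<lambda>l. X l * N) m $$ (a,b)" .
qed (use N in \<open>auto simp: lin_def\<close>)

lemma state_mat_carrier: "state_mat I1 I2 G \<in> carrier_mat (I1*I2) (I1*I2)"
  unfolding state_mat_def by auto

lemma state_mat_col:
  assumes "G j \<in> carrier_mat I1 I2" "j < I1*I2"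
  shows "col (state_mat I1 I2 G) j = vecz (G j)"
  using assms by (intro eq_vecI) (auto simp: state_mat_def vecz_index)

lemma state_mat_mult_vec:
  assumes G: "\<forall>l<I1*I2. G l \<in> carrier_mat I1 I2" and w: "w \<in> carrier_vec (I1*I2)" and r: "r \<le> I1*I2"
    and z: "\<And>l. r \<le> l \<Longrightarrow> l < I1*I2 \<Longrightarrow> w $ l = 0"
  shows "state_mat I1 I2 G *\<^sub>v w = vecz (lin I1 I2 (\<lambda>l. w $ l) G r)"
proof (rule eq_vecI)
  show "dim_vec (state_mat I1 I2 G *\<^sub>v w) = dim_vec (vecz (lin I1 I2 (\<lambda>l. w $ l) G r))"
    by (simp add: vecz_dim[OF lin_carrier] state_mat_def)
  fix i assume "i < dim_vec (vecz (lin I1 I2 (\<lambda>l. w $ l) G r))"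
  then have i: "i < I1*I2" by (simp add: vecz_dim[OF lin_carrier])
  from divmod_bounds[OF i] have i1: "i mod I1 < I1" "i div I1 < I2" by auto
  have "(state_mat I1 I2 G *\<^sub>v w) $ i = (\<Sum>l<I1*I2. G l $$ (i mod I1, i div I1) * w $ l)"
    using i w G by (auto simp: state_mat_def mult_mat_vec_def scalar_prod_def atLeast0LessThan vecz_index intro!: sum.cong)
  also have "\<dots> = (\<Sum>l<r. G l $$ (i mod I1, i div I1) * w $ l)"
    by (rule sum.mono_neutral_right) (use r z in auto)
  also have "\<dots> = vecz (lin I1 I2 (\<lambda>l. w $ l) G r) $ i"
    using vecz_index[OF lin_carrier i] i1 by (simp add: lin_def mult.commute)
  finally show "(state_mat I1 I2 G *\<^sub>v w) $ i = vecz (lin I1 I2 (\<lambda>l. w $ l) G r) $ i" .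
qed

lemma vecz_zero: "vecz (0\<^sub>m I1 I2) = 0\<^sub>v (I1*I2)"
  by (intro eq_vecI) (auto simp: vecz_def divmod_bounds)

lemma state_mat_invertible:
  assumes G: "\<forall>l<I1*I2. G l \<in> carrier_mat I1 I2" and li: "lin_indep_mats I1 I2 G (I1*I2)"
  shows "invertible_mat (state_mat I1 I2 G)"
proof -
  let ?n = "I1*I2"
  have "det (state_mat I1 I2 G) \<noteq> 0"
  proof
    assume "det (state_mat I1 I2 G) = 0"
    then obtain v where v: "v \<in> carrier_vec ?n" "v \<noteq> 0\<^sub>v ?n" "state_mat I1 I2 G *\<^sub>v v = 0\<^sub>v ?n"
      using det_0_iff_vec_prod_zero_field[OF state_mat_carrier] by blast
    have "state_mat I1 I2 G *\<^sub>v v = vecz (lin I1 I2 (\<lambda>l. v $ l) G ?n)"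
      by (rule state_mat_mult_vec[OF G v(1) le_refl]) simp
    then have "vecz (lin I1 I2 (\<lambda>l. v $ l) G ?n) = vecz (0\<^sub>m I1 I2)"
      using v(3) vecz_zero[of I1 I2] by metis
    then have L: "lin I1 I2 (\<lambda>l. v $ l) G ?n = 0\<^sub>m I1 I2" by (rule vecz_inj[OF lin_carrier zero_carrier_mat])
    have "\<forall>i<I1. \<forall>j<I2. (\<Sum>k<?n. v $ k * G k $$ (i,j)) = 0"
    proof (intro allI impI)
      fix i j assume "i < I1" "j < I2"
      then show "(\<Sum>k<?n. v $ k * G k $$ (i,j)) = 0"
        using arg_cong[OF L, of "\<lambda>M. M $$ (i,j)"] by (simp add: lin_def)
    qed
    then have "\<forall>k<?n. v $ k = 0" using li unfolding lin_indep_mats_def by blast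
    then have "v = 0\<^sub>v ?n" using v(1) by (intro eq_vecI) auto
    with v(2) show False by simp
  qed
  then show ?thesis using inv_mat_det[OF state_mat_carrier] by simp
qed

lemma invertible_nz:
  fixes K :: "complex mat"
  assumes K: "K \<in> carrier_mat n n" and n: "0 < n" and inv: "invertible_mat K"
  shows "\<exists>i<n. \<exists>j<n. K $$ (i,j) \<noteq> 0"
proof (rule ccontr)
  assume "\<not> ?thesis"
  then have "K = 0\<^sub>m n n" using K by (intro eq_matI) auto
  then have "det K = 0" using n by simp
  with inv_mat_det[OF K] inv show False by simp
qed

lemma unvec:
  assumes v: "v \<in> carrier_vec (I1*I2)"
  shows "vecz (mat I1 I2 (\<lambda>(a,b). v $ (a + I1*b))) = v"
proof (rule eq_vecI)
  show "dim_vec (vecz (mat I1 I2 (\<lambda>(a,b). v $ (a + I1*b)))) = dim_vec v"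
    using v by (simp add: vecz_def)
  fix i assume "i < dim_vec v"
  then have i: "i < I1*I2" using v by simp
  from divmod_bounds[OF i] have "i mod I1 < I1" "i div I1 < I2" by auto
  then show "vecz (mat I1 I2 (\<lambda>(a,b). v $ (a + I1*b))) $ i = v $ i"
    using vecz_index[of "mat I1 I2 (\<lambda>(a,b). v $ (a + I1*b))" I1 I2 i] i
    by (simp add: mult.commute)
qed

lemma kron_det_nz:
  fixes C B :: "complex mat"
  assumes C: "C \<in> carrier_mat I2 I2" "invertible_mat C" and B: "B \<in> carrier_mat I1 I1" "invertible_mat B"
  shows "det (kron C B) \<noteq> 0"
proof
  let ?n = "I1*I2"
  assume "det (kron C B) = 0"
  then obtain v where v: "v \<in> carrier_vec ?n" "v \<noteq> 0\<^sub>v ?n" "kron C B *\<^sub>v v = 0\<^sub>v ?n"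
    using det_0_iff_vec_prod_zero_field[OF kron_carrier[OF C(1) B(1)]] by blast
  define X where "X = mat I1 I2 (\<lambda>(a,b). v $ (a + I1*b))"
  have X: "X \<in> carrier_mat I1 I2" unfolding X_def by auto
  have vX: "vecz X = v" unfolding X_def by (rule unvec[OF v(1)])
  have "vecz (B * X * transpose_mat C) = vecz (0\<^sub>m I1 I2)"
    using kron_vecz[OF C(1) B(1) X] v(3) vX vecz_zero[of I1 I2] by metis
  then have Z: "B * X * transpose_mat C = 0\<^sub>m I1 I2"
    by (rule vecz_inj[rotated 2]) (use B C X in auto)
  have Bi: "mat_inv B \<in> carrier_mat I1 I1" "mat_inv B * B = 1\<^sub>m I1" using mat_inv_props[OF B] by auto
  have Ci: "mat_inv C \<in> carrier_mat I2 I2" "C * mat_inv C = 1\<^sub>m I2" using mat_inv_props[OF C] by auto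
  have CT: "transpose_mat C * transpose_mat (mat_inv C) = 1\<^sub>m I2"
    using transpose_mult[OF Ci(1) C(1)] mat_inv_props(3)[OF C] by simp
  have "X = mat_inv B * (B * X * transpose_mat C) * transpose_mat (mat_inv C)"
  proof -
    have BX: "B * X \<in> carrier_mat I1 I2" using B X by auto
    have CiT: "transpose_mat (mat_inv C) \<in> carrier_mat I2 I2" using Ci by auto
    have CT': "transpose_mat C \<in> carrier_mat I2 I2" using C by auto
    have Y: "B * X * transpose_mat C \<in> carrier_mat I1 I2" using BX CT' by auto
    have "mat_inv B * (B * X * transpose_mat C) * transpose_mat (mat_inv C)
        = mat_inv B * ((B * X * transpose_mat C) * transpose_mat (mat_inv C))"
      by (rule assoc_mult_mat[OF Bi(1) Y CiT])
    also have "(B * X * transpose_mat C) * transpose_mat (mat_inv C) = (B * X) * (transpose_mat C * transpose_mat (mat_inv C))"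
      by (rule assoc_mult_mat[OF BX CT' CiT])
    also have "\<dots> = B * X" using CT right_mult_one_mat[OF BX] by simp
    also have "mat_inv B * (B * X) = (mat_inv B * B) * X" by (rule assoc_mult_mat[OF Bi(1) B(1) X, symmetric])
    also have "\<dots> = X" using Bi(2) X by simp
    finally show ?thesis by simp
  qed
  also have "\<dots> = 0\<^sub>m I1 I2" unfolding Z using Bi Ci by simp
  finally have "v = vecz (0\<^sub>m I1 I2)" using vX by simp
  then show False using v(2) vecz_zero[of I1 I2] by metis
qed

lemma vecz_nz:
  assumes X: "X \<in> carrier_mat I1 I2" and a: "a < I1" and b: "b < I2" and nz: "X $$ (a,b) \<noteq> (0::complex)"
  shows "vecz X \<noteq> 0\<^sub>v (I1*I2)"
proof
  assume "vecz X = 0\<^sub>v (I1*I2)"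
  then have "vecz X = vecz (0\<^sub>m I1 I2)" using vecz_zero[of I1 I2] by metis
  then have "X = 0\<^sub>m I1 I2" by (rule vecz_inj[OF X zero_carrier_mat])
  then show False using nz a b by simp
qed

lemma kron_factors_det:
  fixes C B :: "complex mat"
  assumes C: "C \<in> carrier_mat I2 I2" and B: "B \<in> carrier_mat I1 I1"
    and I1: "0 < I1" and I2: "0 < I2" and K: "det (kron C B) \<noteq> 0"
  shows "det C \<noteq> 0 \<and> det B \<noteq> 0"
proof (rule ccontr)
  let ?n = "I1*I2"
  have Kc: "kron C B \<in> carrier_mat ?n ?n" by (rule kron_carrier[OF C B])
  assume "\<not> (det C \<noteq> 0 \<and> det B \<noteq> 0)"
  then obtain X where X: "X \<in> carrier_mat I1 I2" and Xnz: "vecz X \<noteq> 0\<^sub>v ?n"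
    and Z: "B * X * transpose_mat C = 0\<^sub>m I1 I2"
  proof (cases "det C = 0")
    case True
    then obtain v where v: "v \<in> carrier_vec I2" "v \<noteq> 0\<^sub>v I2" "C *\<^sub>v v = 0\<^sub>v I2"
      using det_0_iff_vec_prod_zero_field[OF C] by blast
    then obtain b where b: "b < I2" "v $ b \<noteq> 0" by (metis carrier_vecD eq_vecI index_zero_vec)
    define X where "X = mat I1 I2 (\<lambda>(a,c). v $ c)"
    have X: "X \<in> carrier_mat I1 I2" unfolding X_def by auto
    have "X * transpose_mat C = 0\<^sub>m I1 I2"
    proof (rule eq_matI)
      fix a c assume "a < dim_row (0\<^sub>m I1 I2 :: complex mat)" "c < dim_col (0\<^sub>m I1 I2 :: complex mat)"
      then have a: "a < I1" and c: "c < I2" by auto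
      have "(C *\<^sub>v v) $ c = 0" using v(3) c by simp
      then have "(\<Sum>d<I2. C $$ (c,d) * v $ d) = 0"
        using C v(1) c by (simp add: mult_mat_vec_def scalar_prod_def atLeast0LessThan)
      then show "(X * transpose_mat C) $$ (a,c) = 0\<^sub>m I1 I2 $$ (a,c)"
        using a c C unfolding X_def by (simp add: scalar_prod_def atLeast0LessThan mult.commute)
    qed (use X C in auto)
    then have "B * X * transpose_mat C = 0\<^sub>m I1 I2"
      using assoc_mult_mat[OF B X transpose_carrier_mat[THEN iffD2, OF C]] B by simp
    moreover have "vecz X \<noteq> 0\<^sub>v ?n" by (rule vecz_nz[OF X I1 b(1)]) (use b I1 in \<open>simp add: X_def\<close>)
    ultimately show thesis using that X by blast
  next
    case False
    then have "det B = 0" using \<open>\<not> (det C \<noteq> 0 \<and> det B \<noteq> 0)\<close> by simp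
    then obtain v where v: "v \<in> carrier_vec I1" "v \<noteq> 0\<^sub>v I1" "B *\<^sub>v v = 0\<^sub>v I1"
      using det_0_iff_vec_prod_zero_field[OF B] by blast
    then obtain a where a: "a < I1" "v $ a \<noteq> 0" by (metis carrier_vecD eq_vecI index_zero_vec)
    define X where "X = mat I1 I2 (\<lambda>(d,c). v $ d)"
    have X: "X \<in> carrier_mat I1 I2" unfolding X_def by auto
    have BX: "B * X = 0\<^sub>m I1 I2"
    proof (rule eq_matI)
      fix d c assume "d < dim_row (0\<^sub>m I1 I2 :: complex mat)" "c < dim_col (0\<^sub>m I1 I2 :: complex mat)"
      then have d: "d < I1" and c: "c < I2" by auto
      have "(B *\<^sub>v v) $ d = 0" using v(3) d by simp
      then have "(\<Sum>e<I1. B $$ (d,e) * v $ e) = 0"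
        using B v(1) d by (simp add: mult_mat_vec_def scalar_prod_def atLeast0LessThan)
      then show "(B * X) $$ (d,c) = 0\<^sub>m I1 I2 $$ (d,c)"
        using d c B unfolding X_def by (simp add: scalar_prod_def atLeast0LessThan)
    qed (use X B in auto)
    then have "B * X * transpose_mat C = 0\<^sub>m I1 I2" using C by simp
    moreover have "vecz X \<noteq> 0\<^sub>v ?n" by (rule vecz_nz[OF X a(1) I2]) (use a I2 in \<open>simp add: X_def\<close>)
    ultimately show thesis using that X by blast
  qed
  have "kron C B *\<^sub>v vecz X = 0\<^sub>v ?n"
    using kron_vecz[OF C B X] Z vecz_zero[of I1 I2] by metis
  then have "det (kron C B) = 0"
    using det_0_iff_vec_prod_zero_field[OF Kc] Xnz vecz_carrier[OF X] by blast
  with K show False by simp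
qed

lemma lin_cong2: "(\<And>l. l < m \<Longrightarrow> c l = c' l) \<Longrightarrow> (\<And>l. l < m \<Longrightarrow> X l = X' l) \<Longrightarrow>
   lin I1 I2 c X m = lin I1 I2 c' X' m"
  unfolding lin_def by (intro eq_matI) auto

lemma sandwich_cancel:
  fixes B Bi C Ci X :: "complex mat"
  assumes B: "B \<in> carrier_mat I1 I1" and Bi: "Bi \<in> carrier_mat I1 I1" and BiB: "Bi * B = 1\<^sub>m I1"
    and C: "C \<in> carrier_mat I2 I2" and Ci: "Ci \<in> carrier_mat I2 I2" and CiC: "Ci * C = 1\<^sub>m I2"
    and X: "X \<in> carrier_mat I1 I2"
  shows "Bi * (B * X * transpose_mat C) * transpose_mat Ci = X"
proof -
  have CT: "transpose_mat C * transpose_mat Ci = 1\<^sub>m I2"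
    using transpose_mult[OF Ci C] CiC by simp
  have BX: "B * X \<in> carrier_mat I1 I2" using B X by auto
  have CiT: "transpose_mat Ci \<in> carrier_mat I2 I2" using Ci by auto
  have CT': "transpose_mat C \<in> carrier_mat I2 I2" using C by auto
  have Y: "B * X * transpose_mat C \<in> carrier_mat I1 I2" using BX CT' by auto
  have "Bi * (B * X * transpose_mat C) * transpose_mat Ci
      = Bi * ((B * X * transpose_mat C) * transpose_mat Ci)"
    by (rule assoc_mult_mat[OF Bi Y CiT])
  also have "(B * X * transpose_mat C) * transpose_mat Ci = (B * X) * (transpose_mat C * transpose_mat Ci)"
    by (rule assoc_mult_mat[OF BX CT' CiT])
  also have "\<dots> = B * X" using CT right_mult_one_mat[OF BX] by simp
  also have "Bi * (B * X) = (Bi * B) * X" by (rule assoc_mult_mat[OF Bi B X, symmetric])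
  also have "\<dots> = X" using BiB X by simp
  finally show ?thesis .
qed

lemma mat_inv_det:
  fixes A :: "complex mat"
  assumes A: "A \<in> carrier_mat n n" "invertible_mat A"
  shows "det (mat_inv A) \<noteq> 0" "invertible_mat (mat_inv A)" "det A \<noteq> 0"
proof -
  have c: "mat_inv A \<in> carrier_mat n n" and e: "A * mat_inv A = 1\<^sub>m n" using mat_inv_props[OF A] by auto
  from arg_cong[OF e, of det] det_mult[OF A(1) c] have "det A * det (mat_inv A) = 1" by simp
  then show "det (mat_inv A) \<noteq> 0" "det A \<noteq> 0" by auto
  then show "invertible_mat (mat_inv A)" using inv_mat_det[OF c] by simp
qed

lemma fwd:
  fixes G G' :: "nat \<Rightarrow> complex mat"
  assumes Gc: "\<forall>k<I1*I2. G k \<in> carrier_mat I1 I2" and Gc': "\<forall>k<I1*I2. G' k \<in> carrier_mat I1 I2"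
    and UI: "invertible_mat (state_mat I1 I2 G)" and UI': "invertible_mat (state_mat I1 I2 G')"
    and r: "r \<le> I1*I2"
    and sl: "slocc_equiv r I1 I2 G' G"
  shows "\<exists>P Pb Y. P \<in> carrier_mat r r \<and> invertible_mat P \<and>
              Pb \<in> carrier_mat (I1*I2 - r) (I1*I2 - r) \<and> invertible_mat Pb \<and>
              Y \<in> carrier_mat r (I1*I2 - r) \<and>
              (\<exists>C B. C \<in> carrier_mat I2 I2 \<and> B \<in> carrier_mat I1 I1 \<and> invertible_mat C \<and> invertible_mat B \<and>
                 state_mat I1 I2 G * four_block_mat P Y (0\<^sub>m (I1*I2 - r) r) Pb
                   * mat_inv (state_mat I1 I2 G') = kron C B)"
proof -
  let ?n = "I1*I2"
  define U where "U = state_mat I1 I2 G"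
  define U' where "U' = state_mat I1 I2 G'"
  have Uc: "U \<in> carrier_mat ?n ?n" and U'c: "U' \<in> carrier_mat ?n ?n"
    unfolding U_def U'_def by (rule state_mat_carrier)+
  obtain P0 A1 A2 where P0: "P0 \<in> carrier_mat r r" "invertible_mat P0"
    and A1: "A1 \<in> carrier_mat I1 I1" "invertible_mat A1"
    and A2: "A2 \<in> carrier_mat I2 I2" "invertible_mat A2"
    and hk: "\<forall>k<r. G' k = mat I1 I2 (\<lambda>(i,j). \<Sum>l<r. P0 $$ (k,l) * (A1 * G l * transpose_mat A2) $$ (i,j))"
    using sl unfolding slocc_equiv_def by blast
  define A1i where "A1i = mat_inv A1"
  define A2i where "A2i = mat_inv A2"
  have A1i: "A1i \<in> carrier_mat I1 I1" "A1i * A1 = 1\<^sub>m I1" "invertible_mat A1i"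
    unfolding A1i_def using mat_inv_props[OF A1] mat_inv_det[OF A1] by auto
  have A2i: "A2i \<in> carrier_mat I2 I2" "A2i * A2 = 1\<^sub>m I2" "invertible_mat A2i"
    unfolding A2i_def using mat_inv_props[OF A2] mat_inv_det[OF A2] by auto
  define K where "K = kron A2i A1i"
  have Kc: "K \<in> carrier_mat ?n ?n" unfolding K_def by (rule kron_carrier[OF A2i(1) A1i(1)])
  have detK: "det K \<noteq> 0" unfolding K_def by (rule kron_det_nz[OF A2i(1,3) A1i(1,3)])
  define Ui where "Ui = mat_inv U"
  define Uip where "Uip = mat_inv U'"
  have Ui: "Ui \<in> carrier_mat ?n ?n" "Ui * U = 1\<^sub>m ?n" "U * Ui = 1\<^sub>m ?n" "det Ui \<noteq> 0"
    unfolding Ui_def using mat_inv_props[OF Uc UI[folded U_def]] mat_inv_det[OF Uc UI[folded U_def]] by auto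
  have Uip: "Uip \<in> carrier_mat ?n ?n" "Uip * U' = 1\<^sub>m ?n" "U' * Uip = 1\<^sub>m ?n"
    unfolding Uip_def using mat_inv_props[OF U'c UI'[folded U'_def]] by auto
  have detU': "det U' \<noteq> 0" using mat_inv_det[OF U'c UI'[folded U'_def]] by simp
  define T where "T = Ui * K * U'"
  have UiK: "Ui * K \<in> carrier_mat ?n ?n" using Ui(1) Kc by auto
  have Tc: "T \<in> carrier_mat ?n ?n" unfolding T_def using UiK U'c by auto
  define w where "w = (\<lambda>k. vec ?n (\<lambda>l. if l < r then P0 $$ (k,l) else 0))"
  have colT: "col T k = w k" if k: "k < r" for k
  proof -
    have kn: "k < ?n" using k r by simp
    have G'k: "G' k = lin I1 I2 (\<lambda>l. P0 $$ (k,l)) (\<lambda>l. A1 * G l * transpose_mat A2) r"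
      using hk k unfolding lin_def by simp
    have Xc: "\<And>l. l < r \<Longrightarrow> A1 * G l * transpose_mat A2 \<in> carrier_mat I1 I2"
      using Gc r A1 A2 by (meson less_le_trans mult_carrier_mat transpose_carrier_mat)
    have Xc2: "\<And>l. l < r \<Longrightarrow> A1i * (A1 * G l * transpose_mat A2) \<in> carrier_mat I1 I2"
      using Xc A1i(1) by (meson mult_carrier_mat)
    have "K *\<^sub>v vecz (G' k) = vecz (A1i * G' k * transpose_mat A2i)"
      unfolding K_def by (rule kron_vecz[OF A2i(1) A1i(1)]) (use Gc' kn in auto)
    also have "A1i * G' k * transpose_mat A2i
       = lin I1 I2 (\<lambda>l. P0 $$ (k,l)) (\<lambda>l. A1i * (A1 * G l * transpose_mat A2) * transpose_mat A2i) r"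
    proof -
      have "A1i * lin I1 I2 (\<lambda>l. P0 $$ (k,l)) (\<lambda>l. A1 * G l * transpose_mat A2) r
          = lin I1 I2 (\<lambda>l. P0 $$ (k,l)) (\<lambda>l. A1i * (A1 * G l * transpose_mat A2)) r"
        by (rule lin_mult_left[OF A1i(1)]) (rule Xc)
      moreover have "lin I1 I2 (\<lambda>l. P0 $$ (k,l)) (\<lambda>l. A1i * (A1 * G l * transpose_mat A2)) r * transpose_mat A2i
          = lin I1 I2 (\<lambda>l. P0 $$ (k,l)) (\<lambda>l. A1i * (A1 * G l * transpose_mat A2) * transpose_mat A2i) r"
        by (rule lin_mult_right) (use A2i Xc2 in auto)
      ultimately show ?thesis unfolding G'k by simp
    qed
    also have "\<dots> = lin I1 I2 (\<lambda>l. w k $ l) G r"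
    proof (rule lin_cong2)
      fix l assume l: "l < r"
      then show "P0 $$ (k,l) = w k $ l" unfolding w_def using r by simp
      show "A1i * (A1 * G l * transpose_mat A2) * transpose_mat A2i = G l"
        by (rule sandwich_cancel[OF A1(1) A1i(1,2) A2(1) A2i(1,2)]) (use Gc l r in auto)
    qed
    also have "vecz \<dots> = U *\<^sub>v w k"
      unfolding U_def by (rule state_mat_mult_vec[symmetric, OF Gc _ r]) (auto simp: w_def)
    finally have KU: "K *\<^sub>v vecz (G' k) = U *\<^sub>v w k" .
    have "col T k = (Ui * K) *\<^sub>v col U' k" unfolding T_def by (rule col_mult2[OF UiK U'c kn])
    also have "col U' k = vecz (G' k)" unfolding U'_def by (rule state_mat_col) (use Gc' kn in auto)
    also have "(Ui * K) *\<^sub>v vecz (G' k) = Ui *\<^sub>v (K *\<^sub>v vecz (G' k))"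
      by (rule assoc_mult_mat_vec[OF Ui(1) Kc]) (use Gc' kn vecz_carrier in auto)
    also have "\<dots> = Ui *\<^sub>v (U *\<^sub>v w k)" unfolding KU ..
    also have "\<dots> = (Ui * U) *\<^sub>v w k"
      by (rule assoc_mult_mat_vec[symmetric, OF Ui(1) Uc]) (auto simp: w_def)
    also have "\<dots> = w k" unfolding Ui(2) by (rule one_mult_mat_vec) (auto simp: w_def)
    finally show ?thesis .
  qed
  have Tent: "T $$ (i,k) = (if i < r then P0 $$ (k,i) else 0)" if "i < ?n" "k < r" for i k
  proof -
    have "T $$ (i,k) = col T k $ i" using Tc that r by simp
    then show ?thesis using colT[OF that(2)] that unfolding w_def by simp
  qed
  obtain T1 T2 T3 T4 where sb: "split_block T r r = (T1,T2,T3,T4)" by (metis prod_cases4)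
  have dims: "dim_row T = r + (?n - r)" "dim_col T = r + (?n - r)" using Tc r by auto
  note spl = split_block[OF sb dims]
  have T3: "T3 = 0\<^sub>m (?n - r) r"
  proof (rule eq_matI)
    fix i j assume ij: "i < dim_row (0\<^sub>m (?n - r) r :: complex mat)" "j < dim_col (0\<^sub>m (?n - r) r :: complex mat)"
    then have i: "i < ?n - r" and j: "j < r" by auto
    have "T $$ (r + i, j) = T3 $$ (i,j)"
      using spl(1,4) i j by (subst spl(5)) (auto simp: carrier_matD)
    moreover have "T $$ (r + i, j) = 0" using Tent[of "r+i" j] i j by simp
    ultimately show "T3 $$ (i,j) = 0\<^sub>m (?n - r) r $$ (i,j)" using i j by simp
  qed (use spl in auto)
  have T1: "T1 = transpose_mat P0"
  proof (rule eq_matI)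
    fix i j assume ij: "i < dim_row (transpose_mat P0)" "j < dim_col (transpose_mat P0)"
    then have i: "i < r" and j: "j < r" using P0 by auto
    have "T $$ (i, j) = T1 $$ (i,j)"
      using spl(1,4) i j by (subst spl(5)) (auto simp: carrier_matD)
    moreover have "T $$ (i, j) = P0 $$ (j,i)" using Tent[of i j] i j r by simp
    ultimately show "T1 $$ (i,j) = transpose_mat P0 $$ (i,j)" using i j P0 by simp
  qed (use spl P0 in auto)
  have detP0: "det P0 \<noteq> 0" using inv_mat_det[OF P0(1)] P0(2) by simp
  have detT1: "det T1 \<noteq> 0" unfolding T1 using det_transpose[OF P0(1)] detP0 by simp
  have "det T = det Ui * det K * det U'"
    unfolding T_def using det_mult[OF UiK U'c] det_mult[OF Ui(1) Kc] by simp
  then have detT: "det T \<noteq> 0" using Ui(4) detK detU' by simp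
  have "det T = det T1 * det T4"
    by (subst spl(5), rule det_four_block_mat_lower_left_zero[OF spl(1,2) T3 spl(4)])
  then have detT4: "det T4 \<noteq> 0" using detT by simp
  have T1i: "invertible_mat T1" using inv_mat_det[OF spl(1)] detT1 by simp
  have T4i: "invertible_mat T4" using inv_mat_det[OF spl(4)] detT4 by simp
  have Teq: "four_block_mat T1 T2 (0\<^sub>m (?n - r) r) T4 = T" using spl(5) T3 by simp
  have "U * T * Uip = K"
  proof -
    have "U * T = U * ((Ui * K) * U')" unfolding T_def ..
    also have "\<dots> = (U * (Ui * K)) * U'" by (rule assoc_mult_mat[symmetric, OF Uc UiK U'c])
    also have "U * (Ui * K) = (U * Ui) * K" by (rule assoc_mult_mat[symmetric, OF Uc Ui(1) Kc])
    also have "\<dots> = K" using Ui(3) Kc by simp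
    finally have UT: "U * T = K * U'" .
    have "U * T * Uip = K * U' * Uip" unfolding UT ..
    also have "\<dots> = K * (U' * Uip)" by (rule assoc_mult_mat[OF Kc U'c Uip(1)])
    also have "\<dots> = K" using Uip(3) Kc by simp
    finally show ?thesis .
  qed
  then have "state_mat I1 I2 G * four_block_mat T1 T2 (0\<^sub>m (?n - r) r) T4
                   * mat_inv (state_mat I1 I2 G') = kron A2i A1i"
    unfolding Teq U_def[symmetric] U'_def[symmetric] Uip_def[symmetric] K_def .
  then show ?thesis using spl(1,2,4) T1i T4i A1i A2i by blast
qed

lemma bwd:
  fixes G G' :: "nat \<Rightarrow> complex mat"
  assumes Gc: "\<forall>k<I1*I2. G k \<in> carrier_mat I1 I2" and Gc': "\<forall>k<I1*I2. G' k \<in> carrier_mat I1 I2"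
    and UI: "invertible_mat (state_mat I1 I2 G)" and UI': "invertible_mat (state_mat I1 I2 G')"
    and r: "r \<le> I1*I2" and I1: "0 < I1" and I2: "0 < I2"
    and P: "P \<in> carrier_mat r r" "invertible_mat P"
    and Pb: "Pb \<in> carrier_mat (I1*I2 - r) (I1*I2 - r)" "invertible_mat Pb"
    and Y: "Y \<in> carrier_mat r (I1*I2 - r)"
    and C: "C \<in> carrier_mat I2 I2" and B: "B \<in> carrier_mat I1 I1"
    and eq: "state_mat I1 I2 G * four_block_mat P Y (0\<^sub>m (I1*I2 - r) r) Pb
                   * mat_inv (state_mat I1 I2 G') = kron C B"
  shows "slocc_equiv r I1 I2 G' G"
proof -
  let ?n = "I1*I2"
  define U where "U = state_mat I1 I2 G"
  define U' where "U' = state_mat I1 I2 G'"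
  have Uc: "U \<in> carrier_mat ?n ?n" and U'c: "U' \<in> carrier_mat ?n ?n"
    unfolding U_def U'_def by (rule state_mat_carrier)+
  define Uip where "Uip = mat_inv U'"
  have Uip: "Uip \<in> carrier_mat ?n ?n" "Uip * U' = 1\<^sub>m ?n" "det Uip \<noteq> 0"
    unfolding Uip_def using mat_inv_props[OF U'c UI'[folded U'_def]] mat_inv_det[OF U'c UI'[folded U'_def]] by auto
  have detU: "det U \<noteq> 0" using mat_inv_det[OF Uc UI[folded U_def]] by simp
  define T where "T = four_block_mat P Y (0\<^sub>m (?n - r) r) Pb"
  have Tc: "T \<in> carrier_mat ?n ?n"
  proof -
    have "T \<in> carrier_mat (r + (?n - r)) (r + (?n - r))" unfolding T_def using P Pb by simp
    then show ?thesis using r by simp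
  qed
  have "det T = det P * det Pb"
    unfolding T_def by (rule det_four_block_mat_lower_left_zero[OF P(1) Y _ Pb(1)]) simp
  then have detT: "det T \<noteq> 0" using inv_mat_det[OF P(1)] inv_mat_det[OF Pb(1)] P(2) Pb(2) by simp
  define K where "K = kron C B"
  have Kc: "K \<in> carrier_mat ?n ?n" unfolding K_def by (rule kron_carrier[OF C B])
  have UT: "U * T \<in> carrier_mat ?n ?n" using Uc Tc by auto
  have KK: "U * T * Uip = K" using eq unfolding U_def U'_def Uip_def T_def K_def .
  have "det K = det U * det T * det Uip"
    unfolding KK[symmetric] using det_mult[OF UT Uip(1)] det_mult[OF Uc Tc] by simp
  then have "det K \<noteq> 0" using detU detT Uip(3) by simp
  then have "det C \<noteq> 0 \<and> det B \<noteq> 0" using kron_factors_det[OF C B I1 I2] unfolding K_def by simp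
  then have Ci: "invertible_mat C" and Bi: "invertible_mat B" using inv_mat_det[OF C] inv_mat_det[OF B] by auto
  define Cinv where "Cinv = mat_inv C"
  define Binv where "Binv = mat_inv B"
  have Cinv: "Cinv \<in> carrier_mat I2 I2" "Cinv * C = 1\<^sub>m I2" "invertible_mat Cinv"
    unfolding Cinv_def using mat_inv_props[OF C Ci] mat_inv_det[OF C Ci] by auto
  have Binv: "Binv \<in> carrier_mat I1 I1" "Binv * B = 1\<^sub>m I1" "invertible_mat Binv"
    unfolding Binv_def using mat_inv_props[OF B Bi] mat_inv_det[OF B Bi] by auto
  have KU: "K * U' = U * T"
  proof -
    have "K * U' = U * T * Uip * U'" unfolding KK ..
    also have "\<dots> = (U * T) * (Uip * U')" by (rule assoc_mult_mat[OF UT Uip(1) U'c])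
    also have "\<dots> = U * T" using Uip(2) right_mult_one_mat[OF UT] by simp
    finally show ?thesis .
  qed
  have PT: "transpose_mat P \<in> carrier_mat r r" "invertible_mat (transpose_mat P)"
    using P det_transpose[OF P(1)] inv_mat_det[OF P(1)] inv_mat_det[of "transpose_mat P" r] by auto
  have main: "G' k = lin I1 I2 (\<lambda>l. P $$ (l,k)) (\<lambda>l. Binv * G l * transpose_mat Cinv) r" if k: "k < r" for k
  proof -
    have kn: "k < ?n" using k r by simp
    have G'kc: "G' k \<in> carrier_mat I1 I2" using Gc' kn by simp
    define w where "w = vec ?n (\<lambda>l. if l < r then P $$ (l,k) else 0)"
    have colT: "col T k = w"
    proof (rule eq_vecI)
      fix l assume "l < dim_vec w"
      then have l: "l < ?n" unfolding w_def by simp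
      show "col T k $ l = w $ l"
        using l k r P Pb Tc unfolding T_def w_def by (auto simp: col_def)
    qed (use Tc in \<open>simp add: w_def\<close>)
    have "K *\<^sub>v vecz (G' k) = vecz (B * G' k * transpose_mat C)"
      unfolding K_def by (rule kron_vecz[OF C B G'kc])
    moreover have "K *\<^sub>v vecz (G' k) = col (K * U') k"
      using col_mult2[OF Kc U'c kn] state_mat_col[of G' k I1 I2, OF G'kc kn] unfolding U'_def by simp
    moreover have "col (U * T) k = U *\<^sub>v w" using col_mult2[OF Uc Tc kn] colT by simp
    moreover have "U *\<^sub>v w = vecz (lin I1 I2 (\<lambda>l. w $ l) G r)"
      unfolding U_def by (rule state_mat_mult_vec[OF Gc _ r]) (auto simp: w_def)
    moreover have "lin I1 I2 (\<lambda>l. w $ l) G r = lin I1 I2 (\<lambda>l. P $$ (l,k)) G r"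
      by (rule lin_cong2) (use r in \<open>auto simp: w_def\<close>)
    ultimately have "vecz (B * G' k * transpose_mat C) = vecz (lin I1 I2 (\<lambda>l. P $$ (l,k)) G r)"
      using KU by simp
    then have eqk: "B * G' k * transpose_mat C = lin I1 I2 (\<lambda>l. P $$ (l,k)) G r"
      by (rule vecz_inj[rotated 2]) (use B C G'kc lin_carrier in auto)
    have "G' k = Binv * (B * G' k * transpose_mat C) * transpose_mat Cinv"
      by (rule sandwich_cancel[symmetric, OF B Binv(1,2) C Cinv(1,2) G'kc])
    also have "\<dots> = Binv * lin I1 I2 (\<lambda>l. P $$ (l,k)) G r * transpose_mat Cinv" unfolding eqk ..
    also have "Binv * lin I1 I2 (\<lambda>l. P $$ (l,k)) G r = lin I1 I2 (\<lambda>l. P $$ (l,k)) (\<lambda>l. Binv * G l) r"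
      by (rule lin_mult_left[OF Binv(1)]) (use Gc r in auto)
    also have "\<dots> * transpose_mat Cinv = lin I1 I2 (\<lambda>l. P $$ (l,k)) (\<lambda>l. Binv * G l * transpose_mat Cinv) r"
      by (rule lin_mult_right) (use Gc r Binv Cinv in auto)
    finally show ?thesis .
  qed
  show ?thesis
    unfolding slocc_equiv_def
  proof (intro exI conjI allI impI)
    show "transpose_mat P \<in> carrier_mat r r" "invertible_mat (transpose_mat P)" by (rule PT(1), rule PT(2))
    show "Binv \<in> carrier_mat I1 I1" "invertible_mat Binv" using Binv by auto
    show "Cinv \<in> carrier_mat I2 I2" "invertible_mat Cinv" using Cinv by auto
    fix k assume k: "k < r"
    show "G' k = mat I1 I2 (\<lambda>(i, j). \<Sum>l<r. transpose_mat P $$ (k, l) * (Binv * G l * transpose_mat Cinv) $$ (i, j))"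
      unfolding main[OF k] lin_def using P k by (intro eq_matI) auto
  qed
qed

theorem lemma1:
  fixes r I1 I2 :: nat and G G' :: "nat \<Rightarrow> complex mat"
  assumes "0 < r" and "0 < I1" and "0 < I2" and "r \<le> I1 * I2"
    and "\<forall>k<r. G k \<in> carrier_mat I1 I2" and "\<forall>k<r. G' k \<in> carrier_mat I1 I2"
    and "lin_indep_mats I1 I2 G r" and "lin_indep_mats I1 I2 G' r"
    and "complementary_state r I1 I2 G" and "complementary_state r I1 I2 G'"
  shows "(slocc_equiv r I1 I2 G' G \<longleftrightarrow>
           (\<exists>P Pb Y. P \<in> carrier_mat r r \<and> invertible_mat P \<and>
              Pb \<in> carrier_mat (I1*I2 - r) (I1*I2 - r) \<and> invertible_mat Pb \<and>
              Y \<in> carrier_mat r (I1*I2 - r) \<and>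
              vec_space.rank (I2*I2)
                (realign I1 I2 (state_mat I1 I2 G * four_block_mat P Y (0\<^sub>m (I1*I2 - r) r) Pb
                                * mat_inv (state_mat I1 I2 G'))) = 1)) \<and>
         (slocc_equiv r I1 I2 G' G \<longleftrightarrow>
           (\<exists>P Pb Y. P \<in> carrier_mat r r \<and> invertible_mat P \<and>
              Pb \<in> carrier_mat (I1*I2 - r) (I1*I2 - r) \<and> invertible_mat Pb \<and>
              Y \<in> carrier_mat r (I1*I2 - r) \<and>
              (\<exists>C B. C \<in> carrier_mat I2 I2 \<and> B \<in> carrier_mat I1 I1 \<and>
                 state_mat I1 I2 G * four_block_mat P Y (0\<^sub>m (I1*I2 - r) r) Pb
                   * mat_inv (state_mat I1 I2 G') = kron C B)))"
proof -
  let ?n = "I1*I2"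
  let ?M = "\<lambda>P Y Pb. state_mat I1 I2 G * four_block_mat P Y (0\<^sub>m (I1*I2 - r) r) Pb * mat_inv (state_mat I1 I2 G')"
  have Gc: "\<forall>k<I1*I2. G k \<in> carrier_mat I1 I2" and liG: "lin_indep_mats I1 I2 G (I1*I2)"
    using assms(9) unfolding complementary_state_def by auto
  have Gc': "\<forall>k<I1*I2. G' k \<in> carrier_mat I1 I2" and liG': "lin_indep_mats I1 I2 G' (I1*I2)"
    using assms(10) unfolding complementary_state_def by auto
  have UI: "invertible_mat (state_mat I1 I2 G)" by (rule state_mat_invertible[OF Gc liG])
  have UI': "invertible_mat (state_mat I1 I2 G')" by (rule state_mat_invertible[OF Gc' liG'])
  have r: "r \<le> ?n" by (rule assms(4))
  have n0: "0 < ?n" using assms(2,3) by simp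
  have Mc: "?M P Y Pb \<in> carrier_mat ?n ?n" if "P \<in> carrier_mat r r" "Pb \<in> carrier_mat (?n - r) (?n - r)" for P Y Pb
  proof -
    have "four_block_mat P Y (0\<^sub>m (?n - r) r) Pb \<in> carrier_mat (r + (?n - r)) (r + (?n - r))"
      using that by simp
    then have T: "four_block_mat P Y (0\<^sub>m (?n - r) r) Pb \<in> carrier_mat ?n ?n" using r by simp
    have Ui: "mat_inv (state_mat I1 I2 G') \<in> carrier_mat ?n ?n"
      using mat_inv_props(1)[OF state_mat_carrier UI'] .
    show ?thesis using state_mat_carrier[of I1 I2 G] T Ui by auto
  qed
  have F: "slocc_equiv r I1 I2 G' G \<Longrightarrow> \<exists>P Pb Y. P \<in> carrier_mat r r \<and> invertible_mat P \<and>
              Pb \<in> carrier_mat (I1*I2 - r) (I1*I2 - r) \<and> invertible_mat Pb \<and>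
              Y \<in> carrier_mat r (I1*I2 - r) \<and>
              (\<exists>C B. C \<in> carrier_mat I2 I2 \<and> B \<in> carrier_mat I1 I1 \<and> invertible_mat C \<and> invertible_mat B \<and>
                 ?M P Y Pb = kron C B)"
    by (rule fwd[OF Gc Gc' UI UI' r])
  have Bk: "slocc_equiv r I1 I2 G' G" if "P \<in> carrier_mat r r" "invertible_mat P"
      "Pb \<in> carrier_mat (I1*I2 - r) (I1*I2 - r)" "invertible_mat Pb" "Y \<in> carrier_mat r (I1*I2 - r)"
      "C \<in> carrier_mat I2 I2" "B \<in> carrier_mat I1 I1" "?M P Y Pb = kron C B" for P Pb Y C B
    by (rule bwd[OF Gc Gc' UI UI' r assms(2,3) that])
  show ?thesis
  proof (intro conjI iffI)
    assume "slocc_equiv r I1 I2 G' G"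
    from F[OF this] obtain P Pb Y C B where
      h: "P \<in> carrier_mat r r" "invertible_mat P" "Pb \<in> carrier_mat (I1*I2 - r) (I1*I2 - r)" "invertible_mat Pb"
        "Y \<in> carrier_mat r (I1*I2 - r)" "C \<in> carrier_mat I2 I2" "B \<in> carrier_mat I1 I1"
        "invertible_mat C" "invertible_mat B" "?M P Y Pb = kron C B" by blast
    have "det (kron C B) \<noteq> 0" by (rule kron_det_nz[OF h(6,8,7,9)])
    then have "invertible_mat (kron C B)" using inv_mat_det[OF kron_carrier[OF h(6,7)]] by simp
    then obtain i j where ij: "i < ?n" "j < ?n" "kron C B $$ (i,j) \<noteq> 0"
      using invertible_nz[OF kron_carrier[OF h(6,7)] n0] by blast
    have "vec_space.rank (I2*I2) (realign I1 I2 (?M P Y Pb)) = 1"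
      unfolding h(10) by (rule kron_rank1[OF h(6,7) ij])
    then show "\<exists>P Pb Y. P \<in> carrier_mat r r \<and> invertible_mat P \<and>
              Pb \<in> carrier_mat (I1*I2 - r) (I1*I2 - r) \<and> invertible_mat Pb \<and>
              Y \<in> carrier_mat r (I1*I2 - r) \<and>
              vec_space.rank (I2*I2) (realign I1 I2 (?M P Y Pb)) = 1"
      using h by blast
  next
    assume "\<exists>P Pb Y. P \<in> carrier_mat r r \<and> invertible_mat P \<and>
              Pb \<in> carrier_mat (I1*I2 - r) (I1*I2 - r) \<and> invertible_mat Pb \<and>
              Y \<in> carrier_mat r (I1*I2 - r) \<and>
              vec_space.rank (I2*I2) (realign I1 I2 (?M P Y Pb)) = 1"
    then obtain P Pb Y where h: "P \<in> carrier_mat r r" "invertible_mat P" "Pb \<in> carrier_mat (I1*I2 - r) (I1*I2 - r)"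
      "invertible_mat Pb" "Y \<in> carrier_mat r (I1*I2 - r)" "vec_space.rank (I2*I2) (realign I1 I2 (?M P Y Pb)) = 1"
      by blast
    obtain C B where CB: "C \<in> carrier_mat I2 I2" "B \<in> carrier_mat I1 I1" "?M P Y Pb = kron C B"
      using rank1_kron[OF Mc[OF h(1,3)] h(6)] by blast
    show "slocc_equiv r I1 I2 G' G" by (rule Bk[OF h(1-5) CB])
  next
    assume "slocc_equiv r I1 I2 G' G"
    from F[OF this] show "\<exists>P Pb Y. P \<in> carrier_mat r r \<and> invertible_mat P \<and>
              Pb \<in> carrier_mat (I1*I2 - r) (I1*I2 - r) \<and> invertible_mat Pb \<and>
              Y \<in> carrier_mat r (I1*I2 - r) \<and>
              (\<exists>C B. C \<in> carrier_mat I2 I2 \<and> B \<in> carrier_mat I1 I1 \<and> ?M P Y Pb = kron C B)"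
      by blast
  next
    assume "\<exists>P Pb Y. P \<in> carrier_mat r r \<and> invertible_mat P \<and>
              Pb \<in> carrier_mat (I1*I2 - r) (I1*I2 - r) \<and> invertible_mat Pb \<and>
              Y \<in> carrier_mat r (I1*I2 - r) \<and>
              (\<exists>C B. C \<in> carrier_mat I2 I2 \<and> B \<in> carrier_mat I1 I1 \<and> ?M P Y Pb = kron C B)"
    then obtain P Pb Y C B where h: "P \<in> carrier_mat r r" "invertible_mat P" "Pb \<in> carrier_mat (I1*I2 - r) (I1*I2 - r)"
      "invertible_mat Pb" "Y \<in> carrier_mat r (I1*I2 - r)" "C \<in> carrier_mat I2 I2" "B \<in> carrier_mat I1 I1"
      "?M P Y Pb = kron C B"
      by blast
    show "slocc_equiv r I1 I2 G' G" by (rule Bk[OF h])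
  qed
qed

end
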